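(* Let $\Omega,\Omega^*\subset\widehat{\mathbb C}$ be domains each containing $\infty$, and let $f\colon\Omega\to\Omega^*$ be a homeomorphism with $f(\infty)=\infty$. Suppose that each boundary component of $\Omega$ and of $\Omega^*$ is a Jordan curve or a single point, and that for each $\varepsilon>0$ there are at most finitely many Jordan curves in $\partial\Omega$ and in $\partial\Omega^*$ with diameter greater than $\varepsilon$. Let $B$ be a component of $\widehat{\mathbb C}\setminus\Omega$, let $z_0\in\partial B$ and $w_0\in\mathrm{Clu}(f;z_0)$. Then for each $\eta>0$ there exists $\delta>0$ such that for every closed curve $\gamma\subset B(z_0,\delta)\setminus\{z_0\}$ with winding number $1$ around $z_0$ there is a point $z\in\gamma\cap\Omega$ with $|f(z)-w_0|<\eta$. In particular, for each $\eta>0$ there exists $\delta>0$ such that for every such closed curve $\gamma\subset B(z_0,\delta)\setminus\{z_0\}$ there are points $z_1,z_2\in\gamma\cap\Omega$ with $|f(z_1)-f(z_2)|\ge\mathrm{diam}(\mathrm{Clu}(f;z_0))-\eta$.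
   Context: The cluster set of $f$ at $z_0\in\partial\Omega$ is $\mathrm{Clu}(f;z_0)=\bigcap_{\varepsilon>0}\overline{f(B(z_0,\varepsilon)\cap\Omega)}$. *)

theory Defs
  imports "HOL-Complex_Analysis.Complex_Analysis"
begin

text \<open>Cluster set of f at z0 relative to Omega (closure taken in the complex plane;
  under the hypotheses of the lemma the cluster set never contains infinity).\<close>
definition clu :: "(complex \<Rightarrow> complex) \<Rightarrow> complex set \<Rightarrow> complex \<Rightarrow> complex set" where
  "clu f \<Omega> z0 = (\<Inter>\<epsilon>\<in>{0<..}. closure (f ` (ball z0 \<epsilon> \<inter> \<Omega>)))"

definition jordan_curve :: "complex set \<Rightarrow> bool" where
  "jordan_curve C \<longleftrightarrow> (\<exists>g. simple_path g \<and> pathfinish g = pathstart g \<and> path_image g = C)"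

text \<open>The finite part of a domain of the Riemann sphere containing infinity.\<close>
definition domain_with_infinity :: "complex set \<Rightarrow> bool" where
  "domain_with_infinity \<Omega> \<longleftrightarrow> open \<Omega> \<and> connected \<Omega> \<and> (\<exists>R. \<forall>z. R < norm z \<longrightarrow> z \<in> \<Omega>)"

end

theory Submission
  imports Defs
begin

lemma cc_iff_angle:
  fixes X :: "complex set"
  assumes X: "compact X" "a \<notin> X" "b \<notin> X"
  shows "connected_component (- X) a b \<longleftrightarrow>
    (\<exists>\<theta>. continuous_on X \<theta> \<and> (\<forall>x\<in>X. ((x - a) /\<^sub>R norm (x - a)) / ((x - b) /\<^sub>R norm (x - b))
          = exp (\<i> * of_real (\<theta> x))))" (is "?L \<longleftrightarrow> ?R")
proof -
  have ca: "continuous_on X (\<lambda>x. (x - a) /\<^sub>R norm (x - a))"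
    using X by (intro continuous_intros) auto
  have cb: "continuous_on X (\<lambda>x. (x - b) /\<^sub>R norm (x - b))"
    using X by (intro continuous_intros) auto
  have sa: "(\<lambda>x. (x - a) /\<^sub>R norm (x - a)) \<in> X \<rightarrow> sphere 0 1"
  proof
    fix x assume "x \<in> X"
    then have "x - a \<noteq> 0" using X by auto
    then show "(x - a) /\<^sub>R norm (x - a) \<in> sphere 0 1" by simp
  qed
  have sb: "(\<lambda>x. (x - b) /\<^sub>R norm (x - b)) \<in> X \<rightarrow> sphere 0 1"
  proof
    fix x assume "x \<in> X"
    then have "x - b \<noteq> 0" using X by auto
    then show "(x - b) /\<^sub>R norm (x - b) \<in> sphere 0 1" by simp
  qed
  have "connected_component (- X) a b \<longleftrightarrow> homotopic_with_canon (\<lambda>x. True) X (sphere 0 1)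
                   (\<lambda>x. (x - a) /\<^sub>R norm (x - a))
                   (\<lambda>x. (x - b) /\<^sub>R norm (x - b))"
    using Borsuk_maps_homotopic_in_connected_component_eq[OF X] by simp
  also have "\<dots> \<longleftrightarrow> (\<exists>c. homotopic_with_canon (\<lambda>x. True) X (sphere 0 1)
        (\<lambda>x. ((x - a) /\<^sub>R norm (x - a)) / ((x - b) /\<^sub>R norm (x - b))) (\<lambda>x. c))"
    using homotopic_circlemaps_divide[of X "\<lambda>x. (x - a) /\<^sub>R norm (x - a)" "\<lambda>x. (x - b) /\<^sub>R norm (x - b)"]
    by (simp only: ca cb sa sb simp_thms)
  also have "\<dots> \<longleftrightarrow> ?R"
    by (rule inessential_eq_continuous_logarithm_circle)
  finally show ?thesis .
qed

lemma QL:
  fixes G :: "complex set"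
  assumes G: "compact G" "p \<in> G" "open U" "connected_component_set G p \<subseteq> U"
  obtains V where "closed V" "closed (G - V)" "V \<subseteq> G" "connected_component_set G p \<subseteq> V" "V \<subseteq> U"
proof -
  let ?X = "top_of_set G"
  have cc: "connected_component_of ?X x y \<longleftrightarrow> connected_component G x y" for x y
    unfolding connected_component_of_def connected_component_def
    by (auto simp: connectedin_subtopology)
  have cs: "compact_space ?X"
    using G by (simp add: compact_space_subtopology)
  have hs: "Hausdorff_space ?X"
    by (simp add: Hausdorff_space_subtopology)
  have q: "quasi_component_of ?X p = connected_component_of ?X p"
    by (rule quasi_eq_connected_component_of) (use cs hs in blast)
  have K: "connected_component_set G p \<in> quasi_components_of ?X"
  proof -
    have "connected_component_set G p = quasi_component_of_set ?X p"
      using q cc by auto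
    then show ?thesis unfolding quasi_components_of_def using G(2) by auto
  qed
  have cK: "compactin ?X (G - U)"
    using G by (simp add: compactin_subtopology compact_diff)
  have "separated_between ?X (connected_component_set G p) (G - U)"
    using separated_between_quasi_component_compact[OF K cK] G(4)
    by (auto simp: disjnt_def)
  then obtain A B where AB: "openin ?X A" "openin ?X B" "A \<union> B = G" "disjnt A B"
     "connected_component_set G p \<subseteq> A" "G - U \<subseteq> B"
    unfolding separated_between_def by auto
  have GA: "G - A = B" "G - B = A" using AB by (auto simp: disjnt_def)
  have "closedin ?X A"
    using AB(2) GA(2) by (metis openin_closedin_eq topspace_euclidean_subtopology)
  moreover have "closedin ?X B"
    using AB(1) GA(1) by (metis openin_closedin_eq topspace_euclidean_subtopology)
  moreover have "closed G" using G compact_imp_closed by blast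
  ultimately have "closed A" "closed (G - A)"
    using GA closedin_closed_trans by metis+
  then show ?thesis
    using that[of A] AB by (auto simp: disjnt_def)
qed

lemma JD:
  assumes "simple_path c" "pathfinish c = pathstart c" "w0 \<in> path_image c" "\<rho> > 0"
  obtains A B where "closed A" "A \<subseteq> ball w0 \<rho>" "compact B" "connected B"
     "path_image c = A \<union> B" "w0 \<notin> B"
proof -
  obtain t0 where t0: "t0 \<in> {0..1}" "c t0 = w0" using assms(3) unfolding path_image_def by auto
  define d where "d = shiftpath t0 c"
  have sd: "simple_path d" using assms t0 unfolding d_def by (simp add: simple_path_shiftpath)
  have pd: "path_image d = path_image c" using assms t0 unfolding d_def by (simp add: path_image_shiftpath)
  have d0: "d 0 = w0" using t0 unfolding d_def shiftpath_def by simp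
  have d1: "d 1 = w0" using t0 assms(2) unfolding d_def shiftpath_def pathstart_def pathfinish_def by auto
  have contd: "continuous_on {0..1} d" using sd simple_path_imp_path path_def by blast
  then have "uniformly_continuous_on {0..1} d"
    by (simp add: compact_uniformly_continuous)
  then obtain \<sigma> where \<sigma>: "\<sigma> > 0" "\<And>s t. s \<in> {0..1} \<Longrightarrow> t \<in> {0..1} \<Longrightarrow> dist s t < \<sigma> \<Longrightarrow> dist (d s) (d t) < \<rho>"
    unfolding uniformly_continuous_on_def using assms(4) by metis
  define \<tau> where "\<tau> = min (\<sigma>/2) (1/4)"
  have \<tau>: "\<tau> > 0" "\<tau> < \<sigma>" "\<tau> \<le> 1/4" using \<sigma> unfolding \<tau>_def by auto
  define A where "A = d ` ({0..\<tau>} \<union> {1-\<tau>..1})"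
  define B where "B = d ` {\<tau>..1-\<tau>}"
  have "compact A" unfolding A_def
    by (rule compact_continuous_image) (use contd \<tau> in \<open>auto intro: continuous_on_subset\<close>)
  moreover have "A \<subseteq> ball w0 \<rho>"
  proof
    fix x assume "x \<in> A"
    then obtain t where t: "t \<in> {0..\<tau>} \<union> {1-\<tau>..1}" "x = d t" unfolding A_def by blast
    show "x \<in> ball w0 \<rho>"
    proof (cases "t \<le> \<tau>")
      case True
      then show ?thesis using \<sigma>(2)[of 0 t] t \<tau> d0 by (auto simp: dist_real_def)
    next
      case False
      then show ?thesis using \<sigma>(2)[of 1 t] t \<tau> d1 by (auto simp: dist_real_def)
    qed
  qed
  moreover have "compact B" unfolding B_def
    by (rule compact_continuous_image) (use contd \<tau> in \<open>auto intro: continuous_on_subset\<close>)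
  moreover have "connected B" unfolding B_def
    by (rule connected_continuous_image) (use contd \<tau> in \<open>auto intro: continuous_on_subset\<close>)
  moreover have "path_image c = A \<union> B"
  proof -
    have "{0..1} = ({0..\<tau>} \<union> {1-\<tau>..1}) \<union> {\<tau>..1-\<tau>::real}" using \<tau> by auto
    then show ?thesis using pd unfolding path_image_def A_def B_def by (metis image_Un)
  qed
  moreover have "w0 \<notin> B"
  proof
    assume "w0 \<in> B"
    then obtain t where t: "t \<in> {\<tau>..1-\<tau>}" "d t = w0" unfolding B_def by blast
    then have "d t = d 0" using d0 by simp
    moreover have "t \<in> {0..1}" "(0::real) \<in> {0..1}" using t \<tau> by auto
    ultimately have "t = 0 \<or> t = 0 \<and> 0 = (1::real) \<or> t = 1 \<and> 0 = (0::real)"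
      using sd unfolding simple_path_def loop_free_def by blast
    then show False using t \<tau> by auto
  qed
  ultimately show ?thesis using that compact_imp_closed by blast
qed


lemma exp_eq_angle:
  assumes "exp (\<i> * of_real u) = exp (\<i> * of_real v)"
  shows "\<exists>n::int. u - v = 2 * pi * of_int n"
proof -
  have "exp (\<i> * of_real (u - v)) = 1"
    using assms by (simp add: algebra_simps exp_diff)
  then obtain n :: int where "Im (\<i> * of_real (u - v)) = of_int (2 * n) * pi"
    unfolding exp_eq_1 by blast
  then have "u - v = 2 * pi * of_int n" by simp
  then show ?thesis by blast
qed

lemma angle_const:
  fixes f :: "complex \<Rightarrow> real"
  assumes "connected S" "continuous_on S f" "\<And>x. x \<in> S \<Longrightarrow> \<exists>n::int. f x = 2 * pi * of_int n"
  shows "f constant_on S"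
proof (rule continuous_discrete_range_constant[OF assms(1,2)])
  fix x assume x: "x \<in> S"
  show "\<exists>e>0. \<forall>y. y \<in> S \<and> f y \<noteq> f x \<longrightarrow> e \<le> norm (f y - f x)"
  proof (intro exI[of _ "2 * pi"] conjI allI impI)
    show "0 < 2 * pi" by simp
    fix y assume y: "y \<in> S \<and> f y \<noteq> f x"
    obtain n :: int where n: "f x = 2 * pi * of_int n" using assms(3) x by blast
    obtain k :: int where k: "f y = 2 * pi * of_int k" using assms(3) y by blast
    have "k \<noteq> n" using n k y by auto
    then have "(1::int) \<le> \<bar>k - n\<bar>" by arith
    then have "(1::real) \<le> of_int \<bar>k - n\<bar>" by simp
    then have "1 \<le> \<bar>of_int k - of_int n :: real\<bar>" by simp
    then have "2 * pi * 1 \<le> 2 * pi * \<bar>of_int k - of_int n :: real\<bar>"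
      by (intro mult_left_mono) auto
    then show "2 * pi \<le> norm (f y - f x)"
      using n k by (simp add: abs_mult right_diff_distrib[symmetric])
  qed
qed


lemma LC:
  fixes \<Omega>' :: "complex set" and w0 :: complex
  assumes op: "open \<Omega>'" and co: "connected \<Omega>'" and bdd: "bounded (- \<Omega>')"
    and bd': "\<forall>C\<in>components (frontier \<Omega>'). jordan_curve C \<or> (\<exists>a. C = {a})"
    and fin': "\<forall>\<epsilon>>0. finite {C\<in>components (frontier \<Omega>'). jordan_curve C \<and> diameter C > \<epsilon>}"
    and w0: "w0 \<in> frontier \<Omega>'" and \<eta>: "\<eta> > 0"
  shows "\<exists>\<epsilon>>0. \<forall>a\<in>\<Omega>' \<inter> ball w0 \<epsilon>. \<forall>b\<in>\<Omega>' \<inter> ball w0 \<epsilon>. connected_component (\<Omega>' \<inter> ball w0 \<eta>) a b"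
proof -
  define G where "G = frontier \<Omega>'"
  have G\<Omega>: "G \<inter> \<Omega>' = {}" using op by (auto simp: G_def frontier_def interior_open)
  have cG: "compact G"
  proof -
    have "G \<subseteq> - \<Omega>'" using G\<Omega> by auto
    then have "bounded G" using bdd bounded_subset by blast
    then show ?thesis unfolding G_def by (simp add: compact_eq_bounded_closed frontier_closed G_def)
  qed
  have sepG: "connected_component (- X) a b" if "X \<subseteq> G" "a \<in> \<Omega>'" "b \<in> \<Omega>'" for X a b
    unfolding connected_component_def
    using that co G\<Omega> by (intro exI[of _ \<Omega>']) auto
  define S where "S = G \<union> sphere w0 \<eta>"
  have cS: "compact S" unfolding S_def using cG by (simp add: compact_Un)
  define e where "e = w0 + of_real \<eta>"
  have esph: "e \<in> sphere w0 \<eta>" using \<eta> by (simp add: e_def dist_norm)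
  define C where "C = connected_component_set S e"
  have consph: "connected (sphere w0 \<eta>)" by (rule connected_sphere) simp
  have sphC: "sphere w0 \<eta> \<subseteq> C"
    unfolding C_def by (rule connected_component_maximal) (use esph consph in \<open>auto simp: S_def\<close>)
  have CS: "C \<subseteq> S" unfolding C_def by (rule connected_component_subset)
  have cC: "compact C"
  proof -
    have "closed C" unfolding C_def using cS compact_imp_closed closed_connected_component by blast
    moreover have "bounded C" using CS cS compact_imp_bounded bounded_subset by blast
    ultimately show ?thesis by (simp add: compact_eq_bounded_closed)
  qed
  have connC: "connected C" unfolding C_def by (rule connected_connected_component)
  define \<K> where "\<K> = {K\<in>components G. jordan_curve K \<and> diameter K > \<eta>/8}"
  have h8: "\<eta>/8 > 0" using \<eta> by simp
  have fK: "finite \<K>" unfolding \<K>_def G_def using fin' h8 by blast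
  define Bad where "Bad = \<Union>{K\<in>\<K>. w0 \<notin> K}"
  have clBad: "closed Bad"
    unfolding Bad_def
  proof (rule closed_Union)
    show "finite {K \<in> \<K>. w0 \<notin> K}" using fK by auto
    show "\<forall>T\<in>{K \<in> \<K>. w0 \<notin> K}. closed T"
      using cG compact_imp_closed closed_components unfolding \<K>_def by blast
  qed
  have w0Bad: "w0 \<notin> Bad" unfolding Bad_def by auto
  obtain \<rho>1 where \<rho>1: "\<rho>1 > 0" "ball w0 \<rho>1 \<inter> Bad = {}"
  proof -
    have "open (- Bad)" using clBad by auto
    then obtain r where "r > 0" "ball w0 r \<subseteq> - Bad" using w0Bad open_contains_ball by blast
    then show ?thesis using that by auto
  qed
  define \<rho>0 where "\<rho>0 = min \<rho>1 (\<eta>/4)"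
  have \<rho>0: "\<rho>0 > 0" "\<rho>0 \<le> \<rho>1" "\<rho>0 \<le> \<eta>/4" using \<rho>1 \<eta> by (auto simp: \<rho>0_def)
  define J0 where "J0 = connected_component_set G w0"
  have w0G: "w0 \<in> G" using w0 by (simp add: G_def)
  have C3: "p \<in> J0 \<and> jordan_curve J0" if pC: "p \<in> C" and pb: "p \<in> ball w0 \<rho>0" for p
  proof -
    have "dist w0 p < \<eta>" using pb \<rho>0 \<eta> by auto
    then have pG: "p \<in> G" using pC CS by (auto simp: S_def)
    define K where "K = connected_component_set G p"
    have pK: "p \<in> K" using pG by (simp add: K_def)
    have "connected_component_set S p = C"
      using pC unfolding C_def by (rule connected_component_eq)
    then have KC: "K \<subseteq> C"
      unfolding K_def by (metis S_def Un_upper1 connected_component_mono)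
    have Kcomp: "K \<in> components G" unfolding K_def using pG by (rule componentsI)
    have bK: "bounded K" using cG compact_imp_bounded bounded_subset connected_component_subset
      unfolding K_def by blast
    have big: "diameter K > \<eta>/8"
    proof (rule ccontr)
      assume "\<not> diameter K > \<eta>/8"
      then have dK: "diameter K \<le> \<eta>/8" by simp
      have Kb: "K \<subseteq> ball w0 (\<eta>/2)"
      proof
        fix z assume "z \<in> K"
        then have "dist p z \<le> diameter K" using diameter_bounded_bound[OF bK pK] by blast
        moreover have "dist w0 p < \<eta>/4" using pb \<rho>0 by auto
        ultimately have "dist w0 z < \<eta>/2" using dK dist_triangle[of w0 z p] \<eta> by linarith
        then show "z \<in> ball w0 (\<eta>/2)" by simp
      qed
      have Kb': "connected_component_set G p \<subseteq> ball w0 (\<eta>/2)" using Kb by (simp add: K_def)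
      obtain V where V: "closed V" "closed (G - V)" "V \<subseteq> G" "connected_component_set G p \<subseteq> V" "V \<subseteq> ball w0 (\<eta>/2)"
        using QL[OF cG pG open_ball Kb'] by blast
      have "V \<inter> sphere w0 \<eta> = {}" using V(5) \<eta> by auto
      then have h1: "V \<inter> ((G - V) \<union> sphere w0 \<eta>) \<inter> C = {}" by auto
      have h2: "C \<subseteq> V \<union> ((G - V) \<union> sphere w0 \<eta>)" using CS V(3) by (auto simp: S_def)
      have h3: "closed ((G - V) \<union> sphere w0 \<eta>)" using V(2) by auto
      have h4: "p \<in> V \<inter> C" using pK KC V(4) by (auto simp: K_def)
      have eC: "e \<in> C" using sphC esph by blast
      have h5: "e \<in> ((G - V) \<union> sphere w0 \<eta>) \<inter> C" using esph eC by blast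
      show False using connected_closedD[OF connC h1 h2 V(1) h3] h4 h5 by blast
    qed
    have nK: "\<not> (\<exists>a. K = {a})" using big \<eta> by auto
    have "K \<in> components (frontier \<Omega>')" using Kcomp by (simp add: G_def)
    then have "jordan_curve K \<or> (\<exists>a. K = {a})" using bd' by blast
    then have jK: "jordan_curve K" using nK by blast
    then have KK: "K \<in> \<K>" using big Kcomp unfolding \<K>_def by blast
    have "w0 \<in> K"
    proof (rule ccontr)
      assume "w0 \<notin> K"
      then have "K \<subseteq> Bad" using KK unfolding Bad_def by blast
      then have "p \<in> Bad" using pK by blast
      moreover have "p \<in> ball w0 \<rho>1" using pb \<rho>0 by auto
      ultimately show False using \<rho>1(2) by blast
    qed
    then have "J0 = K" unfolding J0_def K_def by (metis connected_component_eq)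
    then show ?thesis using pK jK by simp
  qed
  obtain A0 B' m where AB: "closed A0" "A0 \<subseteq> ball w0 \<rho>0" "compact B'" "connected B'"
     "A0 \<union> B' \<subseteq> G" "C \<inter> ball w0 \<rho>0 \<subseteq> A0 \<union> B'" "0 < m" "m \<le> \<rho>0" "B' \<inter> ball w0 m = {}"
  proof (cases "jordan_curve J0")
    case True
    then obtain c where c: "simple_path c" "pathfinish c = pathstart c" "path_image c = J0"
      unfolding jordan_curve_def by blast
    have "w0 \<in> J0" using w0G by (simp add: J0_def)
    then have "w0 \<in> path_image c" using c(3) by simp
    then obtain A B where A: "closed A" "A \<subseteq> ball w0 \<rho>0" "compact B" "connected B"
       "path_image c = A \<union> B" "w0 \<notin> B"
      using JD[OF c(1,2) _ \<rho>0(1)] by blast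
    have "open (- B)" using A(3) compact_imp_closed by auto
    then obtain r where r: "r > 0" "ball w0 r \<subseteq> - B" using A(6) open_contains_ball by blast
    have "J0 \<subseteq> G" unfolding J0_def by (rule connected_component_subset)
    show ?thesis
    proof (rule that[of A B "min r \<rho>0"])
      show "C \<inter> ball w0 \<rho>0 \<subseteq> A \<union> B" using C3 A(5) c(3) by blast
      show "B \<inter> ball w0 (min r \<rho>0) = {}" using r by auto
    qed (use A \<open>J0 \<subseteq> G\<close> c(3) r \<rho>0 in auto)
  next
    case False
    show ?thesis
    proof (rule that[of "{}" "{}" \<rho>0])
      show "C \<inter> ball w0 \<rho>0 \<subseteq> {} \<union> {}" using C3 False by blast
    qed (use \<rho>0 in auto)
  qed
  show ?thesis
  proof (intro exI[of _ "m/3"] conjI ballI)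
    show "m/3 > 0" using AB by simp
    fix a b assume a: "a \<in> \<Omega>' \<inter> ball w0 (m/3)" and b: "b \<in> \<Omega>' \<inter> ball w0 (m/3)"
    have am: "dist w0 a < m" "dist w0 b < m" using a b AB by auto
    have aeta: "dist w0 a < \<eta>" "dist w0 b < \<eta>" using am AB \<rho>0 \<eta> by auto
    show "connected_component (\<Omega>' \<inter> ball w0 \<eta>) a b"
    proof (rule ccontr)
      assume nc: "\<not> connected_component (\<Omega>' \<inter> ball w0 \<eta>) a b"
      have ncS: "\<not> connected_component (- S) a b"
      proof
        assume "connected_component (- S) a b"
        then obtain T where T: "connected T" "T \<subseteq> - S" "a \<in> T" "b \<in> T"
          unfolding connected_component_def by blast
        have "T \<subseteq> ball w0 \<eta>"
        proof (rule ccontr)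
          assume "\<not> T \<subseteq> ball w0 \<eta>"
          then have "T - ball w0 \<eta> \<noteq> {}" by blast
          moreover have "T \<inter> ball w0 \<eta> \<noteq> {}" using T(3) aeta by auto
          ultimately have "T \<inter> frontier (ball w0 \<eta>) \<noteq> {}"
            using connected_Int_frontier[OF T(1)] by blast
          then show False using T(2) \<eta> by (auto simp: S_def)
        qed
        moreover have "T \<subseteq> \<Omega>'"
        proof (rule ccontr)
          assume "\<not> T \<subseteq> \<Omega>'"
          then have "T - \<Omega>' \<noteq> {}" by blast
          moreover have "T \<inter> \<Omega>' \<noteq> {}" using T(3) a by auto
          ultimately have "T \<inter> frontier \<Omega>' \<noteq> {}"
            using connected_Int_frontier[OF T(1)] by blast
          then show False using T(2) by (auto simp: S_def G_def)
        qed
        ultimately have "connected_component (\<Omega>' \<inter> ball w0 \<eta>) a b"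
          unfolding connected_component_def using T by blast
        then show False using nc by blast
      qed
      obtain C' where C': "C' \<in> components S" "\<not> connected_component (- C') a b"
        using separation_by_component_closed_pointwise[OF _ ncS] cS compact_imp_closed by metis
      have "C' \<inter> sphere w0 \<eta> \<noteq> {}"
      proof
        assume "C' \<inter> sphere w0 \<eta> = {}"
        then have "C' \<subseteq> G" using C'(1) in_components_subset by (fastforce simp: S_def)
        then show False using sepG a b C'(2) by blast
      qed
      then obtain x where x: "x \<in> C'" "x \<in> sphere w0 \<eta>" by blast
      have "C' = connected_component_set S x"
        using C'(1) x(1) by (metis components_iff connected_component_eq)
      also have "\<dots> = C" using sphC x(2) unfolding C_def by (metis connected_component_eq subsetD)
      finally have ncC: "\<not> connected_component (- C) a b" using C'(2) by simp
      have aC: "a \<notin> C" "b \<notin> C" using CS a b aeta G\<Omega> by (auto simp: S_def)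
      define Q where "Q = (\<lambda>x. ((x - a) /\<^sub>R norm (x - a)) / ((x - b) /\<^sub>R norm (x - b)))"
      define X1 where "X1 = A0 \<union> B'"
      have cX1: "compact X1"
      proof -
        have "bounded A0" using AB(5) cG compact_imp_bounded bounded_subset by blast
        then have "compact A0" using AB(1) by (simp add: compact_eq_bounded_closed)
        then show ?thesis using AB(3) by (simp add: X1_def compact_Un)
      qed
      have abX1: "a \<notin> X1" "b \<notin> X1" using AB(5) a b G\<Omega> by (auto simp: X1_def)
      have "X1 \<subseteq> G" using AB(5) by (simp add: X1_def)
      then have "connected_component (- X1) a b" using sepG a b by blast
      then obtain \<theta>1 where \<theta>1: "continuous_on X1 \<theta>1" "\<forall>x\<in>X1. Q x = exp (\<i> * of_real (\<theta>1 x))"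
        using cc_iff_angle[OF cX1 abX1] unfolding Q_def by blast
      define Z where "Z = (C - ball w0 \<rho>0) \<union> B'"
      have cZ: "compact Z" unfolding Z_def using cC AB(3) by (simp add: compact_Un compact_diff)
      have Zb: "Z \<inter> ball w0 m = {}" using AB(8,9) by (auto simp: Z_def)
      have abZ: "a \<notin> Z" "b \<notin> Z" using Zb am by auto
      have "connected_component (- Z) a b"
        unfolding connected_component_def using Zb am
        by (intro exI[of _ "ball w0 m"]) (auto simp: connected_ball)
      then obtain \<theta>2 where \<theta>2: "continuous_on Z \<theta>2" "\<forall>x\<in>Z. Q x = exp (\<i> * of_real (\<theta>2 x))"
        using cc_iff_angle[OF cZ abZ] unfolding Q_def by blast
      obtain c where c: "\<forall>x\<in>B'. \<theta>1 x - \<theta>2 x = c" "exp (\<i> * of_real c) = 1"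
      proof (cases "B' = {}")
        case True then show ?thesis using that[of 0] by auto
      next
        case False
        have BX: "B' \<subseteq> X1" "B' \<subseteq> Z" by (auto simp: X1_def Z_def)
        have ex: "\<exists>n::int. \<theta>1 x - \<theta>2 x = 2 * pi * of_int n" if "x \<in> B'" for x
        proof -
          have "exp (\<i> * of_real (\<theta>1 x)) = exp (\<i> * of_real (\<theta>2 x))"
          proof -
            have "x \<in> X1" "x \<in> Z" using BX that by blast+
            then have "Q x = exp (\<i> * of_real (\<theta>1 x))" "Q x = exp (\<i> * of_real (\<theta>2 x))"
              using \<theta>1(2) \<theta>2(2) by blast+
            then show ?thesis by simp
          qed
          then show ?thesis by (rule exp_eq_angle)
        qed
        have "(\<lambda>x. \<theta>1 x - \<theta>2 x) constant_on B'"
        proof (rule angle_const[OF AB(4)])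
          have "continuous_on B' \<theta>1" by (rule continuous_on_subset[OF \<theta>1(1) BX(1)])
          moreover have "continuous_on B' \<theta>2" by (rule continuous_on_subset[OF \<theta>2(1) BX(2)])
          ultimately show "continuous_on B' (\<lambda>x. \<theta>1 x - \<theta>2 x)" by (intro continuous_on_diff)
        qed (use ex in blast)
        then obtain y where y: "\<forall>x\<in>B'. \<theta>1 x - \<theta>2 x = y" unfolding constant_on_def by blast
        obtain x0 where x0: "x0 \<in> B'" using False by blast
        obtain n :: int where n: "y = 2 * pi * of_int n" using ex[OF x0] y x0 by metis
        have "exp (\<i> * of_real y) = 1"
          unfolding exp_eq_1 by (intro conjI exI[of _ n]) (simp_all add: n)
        then show ?thesis using that y by blast
      qed
      define \<theta> where "\<theta> = (\<lambda>x. if x \<in> A0 then \<theta>1 x else \<theta>2 x + c)"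
      have cov: "C \<subseteq> (C \<inter> A0) \<union> Z"
      proof
        fix x assume "x \<in> C"
        then show "x \<in> (C \<inter> A0) \<union> Z"
          using AB(6) by (cases "x \<in> ball w0 \<rho>0") (auto simp: Z_def)
      qed
      have "continuous_on ((C \<inter> A0) \<union> Z) \<theta>"
        unfolding \<theta>_def
      proof (rule continuous_on_cases)
        show "closed (C \<inter> A0)" using cC AB(1) compact_imp_closed by blast
        show "closed Z" using cZ compact_imp_closed by blast
        show "continuous_on (C \<inter> A0) \<theta>1"
          by (rule continuous_on_subset[OF \<theta>1(1)]) (auto simp: X1_def)
        show "continuous_on Z (\<lambda>x. \<theta>2 x + c)" using \<theta>2(1) by (intro continuous_intros)
        show "\<forall>x. x \<in> C \<inter> A0 \<and> x \<notin> A0 \<or> x \<in> Z \<and> x \<in> A0 \<longrightarrow> \<theta>1 x = \<theta>2 x + c"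
        proof (intro allI impI)
          fix x assume "x \<in> C \<inter> A0 \<and> x \<notin> A0 \<or> x \<in> Z \<and> x \<in> A0"
          then have "x \<in> Z" "x \<in> A0" by auto
          then have "x \<in> B'" using AB(2) by (auto simp: Z_def)
          then show "\<theta>1 x = \<theta>2 x + c" using c(1) by force
        qed
      qed
      then have c\<theta>: "continuous_on C \<theta>" using cov continuous_on_subset by blast
      have e\<theta>: "\<forall>x\<in>C. Q x = exp (\<i> * of_real (\<theta> x))"
      proof
        fix x assume xC: "x \<in> C"
        show "Q x = exp (\<i> * of_real (\<theta> x))"
        proof (cases "x \<in> A0")
          case True then show ?thesis using \<theta>1(2) by (auto simp: \<theta>_def X1_def)
        next
          case False
          then have "x \<in> Z" using cov xC by auto
          then have "Q x = exp (\<i> * of_real (\<theta>2 x)) * exp (\<i> * of_real c)"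
            using \<theta>2(2) c(2) by simp
          also have "\<dots> = exp (\<i> * of_real (\<theta>2 x + c))"
            by (simp add: distrib_left exp_add)
          finally show ?thesis using False by (simp add: \<theta>_def)
        qed
      qed
      have "connected_component (- C) a b"
        using cc_iff_angle[OF cC aC] c\<theta> e\<theta>[unfolded Q_def] by blast
      then show False using ncC by blast
    qed
  qed
qed


lemma claim1:
  fixes \<Omega> \<Omega>' :: "complex set" and f g :: "complex \<Rightarrow> complex" and z0 w :: complex
  assumes dom': "domain_with_infinity \<Omega>'"
    and hom: "homeomorphism \<Omega> \<Omega>' f g"
    and bd': "\<forall>C\<in>components (frontier \<Omega>'). jordan_curve C \<or> (\<exists>a. C = {a})"
    and fin': "\<forall>\<epsilon>>0. finite {C\<in>components (frontier \<Omega>'). jordan_curve C \<and> diameter C > \<epsilon>}"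
    and z0: "z0 \<notin> \<Omega>"
    and w: "w \<in> clu f \<Omega> z0" and \<eta>: "\<eta> > 0"
  shows "\<exists>\<delta>>0. \<forall>\<gamma>. path \<gamma> \<and> pathfinish \<gamma> = pathstart \<gamma>
            \<and> path_image \<gamma> \<subseteq> ball z0 \<delta> - {z0} \<and> winding_number \<gamma> z0 = 1
          \<longrightarrow> (\<exists>z\<in>path_image \<gamma> \<inter> \<Omega>. norm (f z - w) < \<eta>)"
proof -
  have gf: "\<And>x. x \<in> \<Omega> \<Longrightarrow> g (f x) = x" and fO: "f ` \<Omega> = \<Omega>'" and cf: "continuous_on \<Omega> f"
    and fg: "\<And>y. y \<in> \<Omega>' \<Longrightarrow> f (g y) = y" and gO: "g ` \<Omega>' = \<Omega>" and cg: "continuous_on \<Omega>' g"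
    using hom unfolding homeomorphism_def by auto
  have op: "open \<Omega>'" and co: "connected \<Omega>'" and R: "\<exists>R. \<forall>z. R < norm z \<longrightarrow> z \<in> \<Omega>'"
    using dom' unfolding domain_with_infinity_def by auto
  have bdd: "bounded (- \<Omega>')"
  proof -
    obtain R where "\<forall>z. R < norm z \<longrightarrow> z \<in> \<Omega>'" using R by blast
    then have "- \<Omega>' \<subseteq> cball 0 R" by (force simp: dist_norm)
    then show ?thesis using bounded_cball bounded_subset by blast
  qed
  have cl: "\<exists>z\<in>ball z0 r \<inter> \<Omega>. dist (f z) w < e" if rp: "r > 0" and ep: "e > 0" for r e
  proof -
    have "w \<in> closure (f ` (ball z0 r \<inter> \<Omega>))" using w rp unfolding clu_def by auto
    then have "\<forall>e>0. \<exists>y\<in>f ` (ball z0 r \<inter> \<Omega>). dist y w < e"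
      by (simp only: closure_approachable)
    then obtain y where "y \<in> f ` (ball z0 r \<inter> \<Omega>)" "dist y w < e"
      using ep by blast
    then show ?thesis by blast
  qed
  have wfr: "w \<in> frontier \<Omega>'"
  proof -
    have "w \<in> closure \<Omega>'"
      unfolding closure_approachable
    proof (intro allI impI)
      fix e :: real assume "e > 0"
      then obtain z where "z \<in> ball z0 1 \<inter> \<Omega>" "dist (f z) w < e" using cl[of 1 e] by auto
      then show "\<exists>y\<in>\<Omega>'. dist y w < e" using fO by blast
    qed
    moreover have "w \<notin> \<Omega>'"
    proof
      assume wO: "w \<in> \<Omega>'"
      then have gw: "g w \<in> \<Omega>" using gO by blast
      define d where "d = dist (g w) z0"
      have d: "d > 0" using gw z0 by (auto simp: d_def)
      obtain e0 where e0: "e0 > 0" "\<And>y. y \<in> \<Omega>' \<Longrightarrow> dist y w < e0 \<Longrightarrow> dist (g y) (g w) < d/2"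
        using cg wO d unfolding continuous_on_iff by (metis half_gt_zero)
      obtain z where z: "z \<in> ball z0 (d/2) \<inter> \<Omega>" "dist (f z) w < e0" using cl[of "d/2" e0] d e0 by auto
      have "f z \<in> \<Omega>'" using z fO by blast
      then have "dist (g (f z)) (g w) < d/2" using e0 z by blast
      then have "dist z (g w) < d/2" using gf z by auto
      moreover have "dist z0 z < d/2" using z by auto
      ultimately have "dist (g w) z0 < d" using dist_triangle[of "g w" z0 z]
        by (simp add: dist_commute)
      then show False by (simp add: d_def)
    qed
    ultimately show ?thesis using op by (simp add: frontier_def interior_open)
  qed
  obtain \<epsilon> where \<epsilon>: "\<epsilon> > 0" "\<And>a b. a \<in> \<Omega>' \<inter> ball w \<epsilon> \<Longrightarrow> b \<in> \<Omega>' \<inter> ball w \<epsilon> \<Longrightarrow>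
      connected_component (\<Omega>' \<inter> ball w \<eta>) a b"
    using LC[OF op co bdd bd' fin' wfr \<eta>] by blast
  obtain zq where zq: "zq \<in> ball z0 1 \<inter> \<Omega>" "dist (f zq) w < \<epsilon>" using cl[of 1 \<epsilon>] \<epsilon> by auto
  define \<delta> where "\<delta> = dist zq z0"
  have \<delta>: "\<delta> > 0" using zq z0 by (auto simp: \<delta>_def)
  show ?thesis
  proof (intro exI[of _ \<delta>] conjI allI impI)
    show "\<delta> > 0" by (rule \<delta>)
    fix \<gamma> assume \<gamma>: "path \<gamma> \<and> pathfinish \<gamma> = pathstart \<gamma> \<and> path_image \<gamma> \<subseteq> ball z0 \<delta> - {z0}
        \<and> winding_number \<gamma> z0 = 1"
    define P where "P = path_image \<gamma>"
    have cP: "compact P" using \<gamma> by (simp add: P_def compact_path_image)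
    have z0P: "z0 \<notin> P" using \<gamma> by (auto simp: P_def)
    define I where "I = connected_component_set (- P) z0"
    have "z0 \<notin> outside P"
    proof
      assume "z0 \<in> outside P"
      then have "winding_number \<gamma> z0 = 0" using \<gamma> winding_number_zero_in_outside unfolding P_def by blast
      then show False using \<gamma> by simp
    qed
    then have bI: "bounded I" using z0P unfolding outside_def I_def by blast
    have Isub: "I \<subseteq> ball z0 \<delta>"
    proof
      fix x assume xI: "x \<in> I"
      show "x \<in> ball z0 \<delta>"
      proof (rule ccontr)
        assume xb: "x \<notin> ball z0 \<delta>"
        have "connected (- ball z0 \<delta>)"
          by (rule connected_complement_bounded_convex) auto
        moreover have "- ball z0 \<delta> \<subseteq> - P" using \<gamma> by (auto simp: P_def)
        ultimately have "- ball z0 \<delta> \<subseteq> connected_component_set (- P) x"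
          using xb by (intro connected_component_maximal) auto
        also have "\<dots> = I" using xI unfolding I_def by (rule connected_component_eq)
        finally have "- ball z0 \<delta> \<subseteq> I" .
        then have "bounded (- ball z0 \<delta>)" using bI bounded_subset by blast
        then have "bounded (ball z0 \<delta> \<union> - ball z0 \<delta>)" using bounded_ball bounded_Un by blast
        moreover have "ball z0 \<delta> \<union> - ball z0 \<delta> = UNIV" by blast
        ultimately show False using not_bounded_UNIV by metis
      qed
    qed
    have oI: "open I" unfolding I_def using cP compact_imp_closed
      by (intro open_connected_component) auto
    have "z0 \<in> I" using z0P by (simp add: I_def)
    then obtain \<rho> where \<rho>: "\<rho> > 0" "ball z0 \<rho> \<subseteq> I" using oI open_contains_ball by blast
    obtain z1 where z1: "z1 \<in> ball z0 \<rho> \<inter> \<Omega>" "dist (f z1) w < \<epsilon>" using cl[of \<rho> \<epsilon>] \<rho> \<epsilon> by auto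
    show "\<exists>z\<in>path_image \<gamma> \<inter> \<Omega>. norm (f z - w) < \<eta>"
    proof (rule ccontr)
      assume no: "\<not> (\<exists>z\<in>path_image \<gamma> \<inter> \<Omega>. norm (f z - w) < \<eta>)"
      have "f zq \<in> \<Omega>' \<inter> ball w \<epsilon>" using zq fO by (auto simp: dist_commute)
      moreover have "f z1 \<in> \<Omega>' \<inter> ball w \<epsilon>" using z1 fO by (auto simp: dist_commute)
      ultimately have "connected_component (\<Omega>' \<inter> ball w \<eta>) (f zq) (f z1)" using \<epsilon>(2) by blast
      then obtain T where T: "connected T" "T \<subseteq> \<Omega>' \<inter> ball w \<eta>" "f zq \<in> T" "f z1 \<in> T"
        unfolding connected_component_def by blast
      have cgT: "connected (g ` T)"
        using T cg by (intro connected_continuous_image) (auto intro: continuous_on_subset)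
      have gTP: "g ` T \<subseteq> - P"
      proof
        fix y assume "y \<in> g ` T"
        then obtain t where t: "t \<in> T" "y = g t" by blast
        have "g t \<in> \<Omega>" using t T gO by blast
        moreover have "norm (f (g t) - w) < \<eta>"
        proof -
          have "t \<in> \<Omega>'" "t \<in> ball w \<eta>" using t T by auto
          then have "f (g t) = t" "dist w t < \<eta>" using fg by auto
          then show ?thesis by (simp add: dist_norm norm_minus_commute)
        qed
        ultimately show "y \<in> - P" using no t by (auto simp: P_def)
      qed
      have "z1 \<in> g ` T" using T z1 gf by (metis IntD2 image_eqI)
      moreover have "z1 \<in> I" using z1 \<rho> by auto
      ultimately have "g ` T \<subseteq> I"
        unfolding I_def by (metis cgT gTP connected_component_eq connected_component_maximal)
      moreover have "zq \<in> g ` T" using T zq gf by (metis IntD2 image_eqI)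
      ultimately have "zq \<in> ball z0 \<delta>" using Isub by blast
      then show False by (simp add: \<delta>_def dist_commute)
    qed
  qed
qed


theorem lemma3p10:
  fixes \<Omega> \<Omega>' :: "complex set" and f g :: "complex \<Rightarrow> complex"
    and B :: "complex set" and z0 w0 :: complex
  assumes dom: "domain_with_infinity \<Omega>" and dom': "domain_with_infinity \<Omega>'"
    and hom: "homeomorphism \<Omega> \<Omega>' f g"
    and f_inf: "filterlim f at_infinity at_infinity"
    and g_inf: "filterlim g at_infinity at_infinity"
    and bd: "\<forall>C\<in>components (frontier \<Omega>). jordan_curve C \<or> (\<exists>a. C = {a})"
    and bd': "\<forall>C\<in>components (frontier \<Omega>'). jordan_curve C \<or> (\<exists>a. C = {a})"
    and fin: "\<forall>\<epsilon>>0. finite {C\<in>components (frontier \<Omega>). jordan_curve C \<and> diameter C > \<epsilon>}"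
    and fin': "\<forall>\<epsilon>>0. finite {C\<in>components (frontier \<Omega>'). jordan_curve C \<and> diameter C > \<epsilon>}"
    and B: "B \<in> components (- \<Omega>)"
    and z0: "z0 \<in> frontier B"
    and w0: "w0 \<in> clu f \<Omega> z0"
  shows "(\<forall>\<eta>>0. \<exists>\<delta>>0. \<forall>\<gamma>. path \<gamma> \<and> pathfinish \<gamma> = pathstart \<gamma>
            \<and> path_image \<gamma> \<subseteq> ball z0 \<delta> - {z0} \<and> winding_number \<gamma> z0 = 1
          \<longrightarrow> (\<exists>z\<in>path_image \<gamma> \<inter> \<Omega>. norm (f z - w0) < \<eta>))
       \<and> (\<forall>\<eta>>0. \<exists>\<delta>>0. \<forall>\<gamma>. path \<gamma> \<and> pathfinish \<gamma> = pathstart \<gamma>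
            \<and> path_image \<gamma> \<subseteq> ball z0 \<delta> - {z0} \<and> winding_number \<gamma> z0 = 1
          \<longrightarrow> (\<exists>z1\<in>path_image \<gamma> \<inter> \<Omega>. \<exists>z2\<in>path_image \<gamma> \<inter> \<Omega>.
                 norm (f z1 - f z2) \<ge> diameter (clu f \<Omega> z0) - \<eta>))"
proof -
  have op: "open \<Omega>" using dom unfolding domain_with_infinity_def by auto
  have z0O: "z0 \<notin> \<Omega>"
  proof -
    have "closed B" using B op closed_components by (metis closed_Compl)
    then have "frontier B \<subseteq> B" by (rule frontier_subset_closed)
    moreover have "B \<subseteq> - \<Omega>" using B in_components_subset by blast
    ultimately show ?thesis using z0 by blast
  qed
  have c1: "\<exists>\<delta>>0. \<forall>\<gamma>. path \<gamma> \<and> pathfinish \<gamma> = pathstart \<gamma>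
            \<and> path_image \<gamma> \<subseteq> ball z0 \<delta> - {z0} \<and> winding_number \<gamma> z0 = 1
          \<longrightarrow> (\<exists>z\<in>path_image \<gamma> \<inter> \<Omega>. norm (f z - w) < \<eta>)"
    if "w \<in> clu f \<Omega> z0" "\<eta> > 0" for w \<eta>
    by (rule claim1[OF dom' hom bd' fin' z0O that])
  have gf: "\<And>x. x \<in> \<Omega> \<Longrightarrow> g (f x) = x"
    using hom unfolding homeomorphism_def by auto
  have cluc: "compact (clu f \<Omega> z0)"
  proof -
    have "closed (clu f \<Omega> z0)" unfolding clu_def by (intro closed_INT) auto
    moreover have "bounded (clu f \<Omega> z0)"
    proof -
      have "\<forall>r>0. eventually (\<lambda>x. r \<le> norm (g x)) at_infinity"
        using g_inf filterlim_at_infinity[of 0 g at_infinity] by simp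
      then have "eventually (\<lambda>x. norm z0 + 1 \<le> norm (g x)) at_infinity"
        by (metis add_nonneg_pos norm_ge_zero zero_less_one)
      then obtain R where R: "\<And>x. R \<le> norm x \<Longrightarrow> norm z0 + 1 \<le> norm (g x)"
        unfolding eventually_at_infinity by blast
      have "f ` (ball z0 1 \<inter> \<Omega>) \<subseteq> cball 0 R"
      proof
        fix y assume "y \<in> f ` (ball z0 1 \<inter> \<Omega>)"
        then obtain z where z: "z \<in> ball z0 1" "z \<in> \<Omega>" "y = f z" by blast
        have "norm z \<le> norm z0 + norm (z - z0)" by (rule norm_triangle_sub)
        moreover have "norm (z - z0) < 1" using z by (simp add: dist_norm norm_minus_commute)
        ultimately have "norm z < norm z0 + 1" by linarith
        moreover have "norm (g (f z)) = norm z" using gf z by simp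
        ultimately have "\<not> R \<le> norm (f z)" using R by fastforce
        then show "y \<in> cball 0 R" using z by simp
      qed
      then have "closure (f ` (ball z0 1 \<inter> \<Omega>)) \<subseteq> cball 0 R"
        by (intro closure_minimal) auto
      moreover have "clu f \<Omega> z0 \<subseteq> closure (f ` (ball z0 1 \<inter> \<Omega>))"
        unfolding clu_def by auto
      ultimately show ?thesis using bounded_cball bounded_subset by blast
    qed
    ultimately show ?thesis by (simp add: compact_eq_bounded_closed)
  qed
  have part2: "\<exists>\<delta>>0. \<forall>\<gamma>. path \<gamma> \<and> pathfinish \<gamma> = pathstart \<gamma>
            \<and> path_image \<gamma> \<subseteq> ball z0 \<delta> - {z0} \<and> winding_number \<gamma> z0 = 1
          \<longrightarrow> (\<exists>z1\<in>path_image \<gamma> \<inter> \<Omega>. \<exists>z2\<in>path_image \<gamma> \<inter> \<Omega>.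
                 norm (f z1 - f z2) \<ge> diameter (clu f \<Omega> z0) - \<eta>)" if \<eta>: "\<eta> > 0" for \<eta>
  proof -
    obtain w1 w2 where w12: "w1 \<in> clu f \<Omega> z0" "w2 \<in> clu f \<Omega> z0"
      "dist w1 w2 = diameter (clu f \<Omega> z0)"
      using diameter_compact_attained[OF cluc] w0 by blast
    have h: "\<eta>/2 > 0" using \<eta> by simp
    obtain \<delta>1 where \<delta>1: "\<delta>1 > 0" "\<forall>\<gamma>. path \<gamma> \<and> pathfinish \<gamma> = pathstart \<gamma>
            \<and> path_image \<gamma> \<subseteq> ball z0 \<delta>1 - {z0} \<and> winding_number \<gamma> z0 = 1
          \<longrightarrow> (\<exists>z\<in>path_image \<gamma> \<inter> \<Omega>. norm (f z - w1) < \<eta>/2)"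
      using c1[OF w12(1) h] by blast
    obtain \<delta>2 where \<delta>2: "\<delta>2 > 0" "\<forall>\<gamma>. path \<gamma> \<and> pathfinish \<gamma> = pathstart \<gamma>
            \<and> path_image \<gamma> \<subseteq> ball z0 \<delta>2 - {z0} \<and> winding_number \<gamma> z0 = 1
          \<longrightarrow> (\<exists>z\<in>path_image \<gamma> \<inter> \<Omega>. norm (f z - w2) < \<eta>/2)"
      using c1[OF w12(2) h] by blast
    show ?thesis
    proof (intro exI[of _ "min \<delta>1 \<delta>2"] conjI allI impI)
      show "min \<delta>1 \<delta>2 > 0" using \<delta>1 \<delta>2 by simp
      fix \<gamma> assume \<gamma>: "path \<gamma> \<and> pathfinish \<gamma> = pathstart \<gamma>
            \<and> path_image \<gamma> \<subseteq> ball z0 (min \<delta>1 \<delta>2) - {z0} \<and> winding_number \<gamma> z0 = 1"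
      have "path_image \<gamma> \<subseteq> ball z0 \<delta>1 - {z0}" "path_image \<gamma> \<subseteq> ball z0 \<delta>2 - {z0}"
        using \<gamma> by auto
      then obtain z1 z2 where z1: "z1 \<in> path_image \<gamma> \<inter> \<Omega>" "norm (f z1 - w1) < \<eta>/2"
        and z2: "z2 \<in> path_image \<gamma> \<inter> \<Omega>" "norm (f z2 - w2) < \<eta>/2"
        using \<delta>1(2) \<delta>2(2) \<gamma> by meson
      have "norm (w1 - w2) \<le> norm (w1 - f z1) + norm ((f z1 - f z2) + (f z2 - w2))"
        using norm_triangle_ineq[of "w1 - f z1" "(f z1 - f z2) + (f z2 - w2)"] by simp
      also have "\<dots> \<le> norm (w1 - f z1) + (norm (f z1 - f z2) + norm (f z2 - w2))"
        using norm_triangle_ineq[of "f z1 - f z2" "f z2 - w2"] by simp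
      finally have "norm (w1 - w2) \<le> norm (f z1 - w1) + norm (f z1 - f z2) + norm (f z2 - w2)"
        by (simp add: norm_minus_commute)
      then have "norm (f z1 - f z2) \<ge> diameter (clu f \<Omega> z0) - \<eta>"
        using z1(2) z2(2) w12(3) by (simp add: dist_norm)
      then show "\<exists>z1\<in>path_image \<gamma> \<inter> \<Omega>. \<exists>z2\<in>path_image \<gamma> \<inter> \<Omega>.
                 norm (f z1 - f z2) \<ge> diameter (clu f \<Omega> z0) - \<eta>"
        using z1(1) z2(1) by blast
    qed
  qed
  show ?thesis using c1[OF w0] part2 by blast
qed

end
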